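(* Fix a rooted phylogenetic tree $T$ with root $\rho$, leaf set $[n]$, and edge set $E$. Let $\mathcal{G}_T=\{PD_{T,l}: l\in\mathbb{R}_{\ge 0}^E\}$ be the class of cooperative games on the player set $[n]$ induced by $T$ with non-negative edge lengths. This class is closed under addition, since $PD_{T,l_1}+PD_{T,l_2}=PD_{T,l_1+l_2}$. A value on $\mathcal{G}_T$ is a map $\psi$ assigning to each $\nu\in\mathcal{G}_T$ a function $\psi_\nu:[n]\to\mathbb{R}$. Consider the following axioms: 1. Efficiency: $\sum_{i\in[n]}\psi_\nu(i)=\nu([n])$. 2. Symmetry: if $i\ne j$ and $\nu(C\cup\{i\})=\nu(C\cup\{j\})$ for all $C\subseteq[n]\setminus\{i,j\}$, then $\psi_\nu(i)=\psi_\nu(j)$. 3. Dummy: if $\nu(C\cup\{i\})=\nu(C)$ for all $C\subseteq[n]\setminus\{i\}$, then $\psi_\nu(i)=0$. 4. Additivity: $\psi_{\nu_1+\nu_2}(i)=\psi_{\nu_1}(i)+\psi_{\nu_2}(i)$ for all $\nu_1,\nu_2\in\mathcal{G}_T$ and all $i$. Then there is exactly one value $\psi$ on $\mathcal{G}_T$ satisfying Axioms 1–4, and it is the Shapley value: $$\psi_\nu(i)=\frac{1}{n!}\sum_{S\subseteq[n]:\,i\in S}(|S|-1)!\,(n-|S|)!\,\big(\nu(S)-\nu(S\setminus\{i\})\big).$$ Equivalently, for $\nu=PD_{T,l}$, $\psi_\nu(i)=\sum_{e\in P(T;\rho,i)} l(e)/n(e)$ (the Fair Proportion index).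
   Context: A rooted phylogenetic tree on $[n]$ is a rooted tree with leaf set $[n]$ whose non-leaf vertices are unlabelled and have out-degree at least 2. For edge lengths $l\ge 0$ and $S\subseteq[n]$, the phylogenetic diversity $PD_{T,l}(S)$ is the sum of the lengths of the edges of the minimal subtree of $T$ containing $S\cup\{\rho\}$, with $PD_{T,l}(\emptyset)=0$. $n(e)$ is the number of leaves descended from edge $e$, and $P(T;\rho,i)$ is the path from $\rho$ to leaf $i$. *)

theory Defs
  imports Main "HOL-Analysis.Analysis"
begin

text \<open>A rooted tree is encoded by a finite vertex set V (vertices are natural numbers),
a root r and a parent function; the edge of a non-root vertex v is the edge
(parent v, v), so edges are identified with the non-root vertices.\<close>

definition rooted_tree :: "nat set \<Rightarrow> nat \<Rightarrow> (nat \<Rightarrow> nat) \<Rightarrow> bool" where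
  "rooted_tree V r par \<longleftrightarrow> finite V \<and> r \<in> V \<and> par r = r \<and>
     (\<forall>v\<in>V. par v \<in> V) \<and> (\<forall>v\<in>V. \<exists>k. (par ^^ k) v = r)"

definition tree_edges :: "nat set \<Rightarrow> nat \<Rightarrow> nat set" where
  "tree_edges V r = V - {r}"

definition children :: "nat set \<Rightarrow> nat \<Rightarrow> (nat \<Rightarrow> nat) \<Rightarrow> nat \<Rightarrow> nat set" where
  "children V r par v = {c \<in> V - {r}. par c = v}"

definition tree_leaves :: "nat set \<Rightarrow> nat \<Rightarrow> (nat \<Rightarrow> nat) \<Rightarrow> nat set" where
  "tree_leaves V r par = {v \<in> V. children V r par v = {}}"

definition phylo_tree :: "nat set \<Rightarrow> nat \<Rightarrow> (nat \<Rightarrow> nat) \<Rightarrow> nat \<Rightarrow> bool" where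
  "phylo_tree V r par n \<longleftrightarrow> rooted_tree V r par \<and> tree_leaves V r par = {1..n} \<and>
     (\<forall>v \<in> V - tree_leaves V r par. card (children V r par v) \<ge> 2)"

definition is_anc :: "(nat \<Rightarrow> nat) \<Rightarrow> nat \<Rightarrow> nat \<Rightarrow> bool" where
  "is_anc par u v \<longleftrightarrow> (\<exists>k. (par ^^ k) v = u)"

definition root_path :: "nat set \<Rightarrow> nat \<Rightarrow> (nat \<Rightarrow> nat) \<Rightarrow> nat \<Rightarrow> nat set" where
  "root_path V r par i = {e \<in> tree_edges V r. is_anc par e i}"

definition n_desc :: "nat set \<Rightarrow> nat \<Rightarrow> (nat \<Rightarrow> nat) \<Rightarrow> nat \<Rightarrow> nat" where
  "n_desc V r par e = card {i \<in> tree_leaves V r par. is_anc par e i}"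

text \<open>Phylogenetic diversity: total length of the edges of the minimal subtree
spanning S and the root, i.e. the union of the root-to-leaf paths for leaves in S.\<close>
definition PD :: "nat set \<Rightarrow> nat \<Rightarrow> (nat \<Rightarrow> nat) \<Rightarrow> (nat \<Rightarrow> real) \<Rightarrow> nat set \<Rightarrow> real" where
  "PD V r par l S = (\<Sum>e \<in> (\<Union>i\<in>S. root_path V r par i). l e)"

definition PD_games :: "nat set \<Rightarrow> nat \<Rightarrow> (nat \<Rightarrow> nat) \<Rightarrow> (nat set \<Rightarrow> real) set" where
  "PD_games V r par = {PD V r par l | l. \<forall>e \<in> tree_edges V r. l e \<ge> 0}"

definition shapley :: "nat \<Rightarrow> (nat set \<Rightarrow> real) \<Rightarrow> nat \<Rightarrow> real" where
  "shapley n \<nu> i = (1 / fact n) *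
     (\<Sum>S \<in> {S. S \<subseteq> {1..n} \<and> i \<in> S}.
        fact (card S - 1) * fact (n - card S) * (\<nu> S - \<nu> (S - {i})))"

definition value_axioms :: "nat \<Rightarrow> (nat set \<Rightarrow> real) set \<Rightarrow> ((nat set \<Rightarrow> real) \<Rightarrow> nat \<Rightarrow> real) \<Rightarrow> bool" where
  "value_axioms n G \<psi> \<longleftrightarrow>
     (\<forall>\<nu>\<in>G. (\<Sum>i\<in>{1..n}. \<psi> \<nu> i) = \<nu> {1..n}) \<and>
     (\<forall>\<nu>\<in>G. \<forall>i\<in>{1..n}. \<forall>j\<in>{1..n}. i \<noteq> j \<longrightarrow>
        (\<forall>C. C \<subseteq> {1..n} - {i, j} \<longrightarrow> \<nu> (C \<union> {i}) = \<nu> (C \<union> {j})) \<longrightarrow> \<psi> \<nu> i = \<psi> \<nu> j) \<and>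
     (\<forall>\<nu>\<in>G. \<forall>i\<in>{1..n}.
        (\<forall>C. C \<subseteq> {1..n} - {i} \<longrightarrow> \<nu> (C \<union> {i}) = \<nu> C) \<longrightarrow> \<psi> \<nu> i = 0) \<and>
     (\<forall>\<nu>1\<in>G. \<forall>\<nu>2\<in>G. \<forall>i\<in>{1..n}.
        \<psi> (\<lambda>S. \<nu>1 S + \<nu>2 S) i = \<psi> \<nu>1 i + \<psi> \<nu>2 i)"

end

theory Submission
  imports Defs
begin


lemma leaf_below:
  assumes rt: "rooted_tree V r par" and v: "v \<in> V"
  shows "\<exists>w \<in> tree_leaves V r par. is_anc par v w"
proof -
  define A where "A = {w\<in>V. is_anc par v w}"
  define d where "d w = (LEAST k. (par^^k) w = r)" for w
  have fin: "finite A" using rt unfolding A_def rooted_tree_def by auto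
  have vA: "v \<in> A" unfolding A_def is_anc_def using v by (auto intro: exI[of _ 0])
  define m where "m = Max (d ` A)"
  have "m \<in> d ` A" unfolding m_def using fin vA by (intro Max_in) auto
  then obtain w where wA: "w \<in> A" and wm: "d w = m" by auto
  have wmax: "\<forall>x\<in>A. d x \<le> d w" using fin wm unfolding m_def by auto
  have "children V r par w = {}"
  proof (rule ccontr)
    assume "children V r par w \<noteq> {}"
    then obtain c where c: "c \<in> V" "c \<noteq> r" "par c = w" by (auto simp: children_def)
    from wA obtain j where j: "(par^^j) w = v" by (auto simp: A_def is_anc_def)
    have "(par^^Suc j) c = (par^^j) (par c)" by (simp only: funpow_Suc_right comp_def)
    with j c have "(par^^Suc j) c = v" by simp
    with c have "c \<in> A" unfolding A_def is_anc_def by blast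
    have ex: "\<exists>k. (par^^k) c = r" using rt c unfolding rooted_tree_def by auto
    have dc: "(par^^(d c)) c = r" unfolding d_def using ex by (rule LeastI_ex)
    have "d c \<noteq> 0"
    proof
      assume "d c = 0" with dc have "c = r" by simp
      with c show False by simp
    qed
    then obtain k where k: "d c = Suc k" by (cases "d c") auto
    have "(par^^Suc k) c = (par^^k) (par c)" by (simp only: funpow_Suc_right comp_def)
    with dc k c have "(par^^k) w = r" by simp
    hence "d w \<le> k" unfolding d_def by (rule Least_le)
    with k wmax \<open>c \<in> A\<close> show False by fastforce
  qed
  with wA show ?thesis by (auto simp: A_def tree_leaves_def)
qed

lemma arith_coef:
  assumes "k \<le> n" "n \<ge> 1"
  shows "real k * (fact (k-1) * fact (n-k)) - real (n-k) * (fact (k+1-1) * fact (n-(k+1)))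
     = (if k = n then fact n else 0) - (if k = 0 then (fact n :: real) else 0)"
proof (cases "k = 0")
  case True
  then show ?thesis using assms fact_reduce[of n, where 'a=real] by auto
next
  case False
  note k0 = False
  show ?thesis
  proof (cases "k = n")
    case True
    then show ?thesis using assms k0 fact_reduce[of n, where 'a=real] by auto
  next
    case False
    have a: "real k * fact (k-1) = fact k" using k0 fact_reduce[of k, where 'a=real] by auto
    have b: "real (n-k) * fact (n-(k+1)) = fact (n-k)" using False assms fact_reduce[of "n-k", where 'a=real]
      by (auto simp: algebra_simps)
    have h1: "real k * (fact (k-1) * fact (n-k)) = fact k * fact (n-k)" using a by (simp add: mult.assoc[symmetric])
    have h2: "real (n-k) * (fact (k+1-1) * fact (n-(k+1))) = fact k * fact (n-k)"
    proof -
      have "real (n-k) * (fact (k+1-1) * fact (n-(k+1))) = fact k * (real (n-k) * fact (n-(k+1)))" by simp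
      also have "\<dots> = fact k * fact (n-k)" using b by simp
      finally show ?thesis .
    qed
    show ?thesis using k0 False by (simp only: h1 h2)
  qed
qed



lemma shapley_eff:
  fixes \<nu> :: "nat set \<Rightarrow> real"
  shows "(\<Sum>i\<in>{1..n}. shapley n \<nu> i) = \<nu> {1..n} - \<nu> {}"
proof (cases "n = 0")
  case True then show ?thesis by simp
next
  case False
  hence n1: "n \<ge> 1" by simp
  define N where "N = {1..n}"
  define w where "w k = (fact (k-1) * fact (n-k) :: real)" for k
  have finN: "finite N" and cardN: "card N = n" by (auto simp: N_def)
  have setS: "\<And>i. {S. S \<subseteq> N \<and> i \<in> S} = {S \<in> Pow N. i \<in> S}" by auto
  have A1: "(\<Sum>i\<in>N. \<Sum>S\<in>{S. S\<subseteq>N \<and> i\<in>S}. w (card S) * \<nu> S)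
      = (\<Sum>S\<in>Pow N. real (card S) * w (card S) * \<nu> S)"
  proof -
    have "(\<Sum>i\<in>N. \<Sum>S\<in>{S. S\<subseteq>N \<and> i\<in>S}. w (card S) * \<nu> S)
        = (\<Sum>i\<in>N. \<Sum>S\<in>{S \<in> Pow N. i\<in>S}. w (card S) * \<nu> S)" by (simp only: setS)
    also have "\<dots> = (\<Sum>S\<in>Pow N. \<Sum>i\<in>{i\<in>N. i\<in>S}. w (card S) * \<nu> S)"
      by (rule sum.swap_restrict) (use finN in auto)
    also have "\<dots> = (\<Sum>S\<in>Pow N. real (card S) * w (card S) * \<nu> S)"
    proof (rule sum.cong)
      fix S assume "S \<in> Pow N"
      hence "{i\<in>N. i\<in>S} = S" by auto
      thus "(\<Sum>i\<in>{i\<in>N. i\<in>S}. w (card S) * \<nu> S) = real (card S) * w (card S) * \<nu> S" by simp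
    qed simp
    finally show ?thesis .
  qed
  have A2: "(\<Sum>i\<in>N. \<Sum>S\<in>{S. S\<subseteq>N \<and> i\<in>S}. w (card S) * \<nu> (S - {i}))
      = (\<Sum>T\<in>Pow N. real (n - card T) * w (card T + 1) * \<nu> T)"
  proof -
    have "(\<Sum>i\<in>N. \<Sum>S\<in>{S. S\<subseteq>N \<and> i\<in>S}. w (card S) * \<nu> (S - {i}))
        = (\<Sum>i\<in>N. \<Sum>T\<in>{T \<in> Pow N. i \<notin> T}. w (card T + 1) * \<nu> T)"
    proof (rule sum.cong)
      fix i assume iN: "i \<in> N"
      show "(\<Sum>S\<in>{S. S\<subseteq>N \<and> i\<in>S}. w (card S) * \<nu> (S - {i}))
          = (\<Sum>T\<in>{T \<in> Pow N. i \<notin> T}. w (card T + 1) * \<nu> T)"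
      proof (rule sum.reindex_bij_witness[where i="insert i" and j="\<lambda>S. S - {i}"])
        fix S assume S: "S \<in> {S. S\<subseteq>N \<and> i\<in>S}"
        show "insert i (S - {i}) = S" using S by auto
        show "S - {i} \<in> {T \<in> Pow N. i \<notin> T}" using S by auto
        have "finite S" using S finN by (auto intro: finite_subset)
        hence "card S = card (S - {i}) + 1" using S
          by (metis One_nat_def Suc_pred card_Diff_singleton card_gt_0_iff empty_iff mem_Collect_eq add.commute plus_1_eq_Suc)
        thus "w (card (S - {i}) + 1) * \<nu> (S - {i}) = w (card S) * \<nu> (S - {i})" by simp
      next
        fix T assume T: "T \<in> {T \<in> Pow N. i \<notin> T}"
        show "insert i T - {i} = T" using T by auto
        show "insert i T \<in> {S. S\<subseteq>N \<and> i\<in>S}" using T iN by auto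
      qed
    qed simp
    also have "\<dots> = (\<Sum>T\<in>Pow N. \<Sum>i\<in>{i\<in>N. i \<notin> T}. w (card T + 1) * \<nu> T)"
      by (rule sum.swap_restrict) (use finN in auto)
    also have "\<dots> = (\<Sum>T\<in>Pow N. real (n - card T) * w (card T + 1) * \<nu> T)"
    proof (rule sum.cong)
      fix T assume T: "T \<in> Pow N"
      hence "{i\<in>N. i\<notin>T} = N - T" by auto
      moreover have "card (N - T) = n - card T" using T finN cardN by (simp add: card_Diff_subset finite_subset)
      ultimately show "(\<Sum>i\<in>{i\<in>N. i\<notin>T}. w (card T + 1) * \<nu> T) = real (n - card T) * w (card T + 1) * \<nu> T"
        by simp
    qed simp
    finally show ?thesis .
  qed
  have coef: "\<And>T. T \<in> Pow N \<Longrightarrow> real (card T) * w (card T) - real (n - card T) * w (card T + 1)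
      = (if T = N then fact n else 0) - (if T = {} then fact n else 0)"
  proof -
    fix T assume T: "T \<in> Pow N"
    have fT: "finite T" using T finN by (auto intro: finite_subset)
    have le: "card T \<le> n" using T finN cardN by (metis PowD card_mono)
    have e1: "(card T = n) = (T = N)" using T finN cardN
      by (metis PowD card_subset_eq)
    have e2: "(card T = 0) = (T = {})" using fT by simp
    show "real (card T) * w (card T) - real (n - card T) * w (card T + 1)
      = (if T = N then fact n else 0) - (if T = {} then fact n else 0)"
      using arith_coef[OF le n1] unfolding w_def e1 e2 by simp
  qed
  have "(\<Sum>i\<in>N. shapley n \<nu> i) = (1 / fact n) *
      ((\<Sum>i\<in>N. \<Sum>S\<in>{S. S\<subseteq>N \<and> i\<in>S}. w (card S) * \<nu> S)
      - (\<Sum>i\<in>N. \<Sum>S\<in>{S. S\<subseteq>N \<and> i\<in>S}. w (card S) * \<nu> (S - {i})))"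
    unfolding shapley_def N_def[symmetric] w_def
    by (simp add: sum_distrib_left[symmetric] sum_subtractf[symmetric] algebra_simps sum_divide_distrib[symmetric])
  also have "\<dots> = (1 / fact n) * (\<Sum>T\<in>Pow N. (real (card T) * w (card T) - real (n - card T) * w (card T + 1)) * \<nu> T)"
    unfolding A1 A2 by (simp add: sum_subtractf[symmetric] algebra_simps)
  also have "\<dots> = (1 / fact n) * (\<Sum>T\<in>Pow N. (if T = N then fact n * \<nu> T else 0) - (if T = {} then fact n * \<nu> T else 0))"
  proof (intro arg_cong[where f="\<lambda>x. (1 / fact n) * x"] sum.cong refl)
    fix T assume T: "T \<in> Pow N"
    show "(real (card T) * w (card T) - real (n - card T) * w (card T + 1)) * \<nu> T
        = (if T = N then fact n * \<nu> T else 0) - (if T = {} then fact n * \<nu> T else 0)"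
      unfolding coef[OF T] by (simp add: left_diff_distrib)
  qed
  also have "\<dots> = \<nu> N - \<nu> {}"
    using finN by (simp add: sum_subtractf right_diff_distrib[symmetric])
  finally show ?thesis by (simp add: N_def)
qed



lemma shapley_dummy:
  assumes "\<forall>C. C \<subseteq> {1..n} - {i} \<longrightarrow> \<nu> (C \<union> {i}) = \<nu> C"
  shows "shapley n \<nu> i = 0"
proof -
  have "\<And>S. S \<in> {S. S \<subseteq> {1..n} \<and> i \<in> S} \<Longrightarrow> \<nu> S - \<nu> (S - {i}) = 0"
  proof -
    fix S assume S: "S \<in> {S. S \<subseteq> {1..n} \<and> i \<in> S}"
    hence "S - {i} \<subseteq> {1..n} - {i}" and "(S - {i}) \<union> {i} = S" by auto
    with assms have "\<nu> ((S - {i}) \<union> {i}) = \<nu> (S - {i})" by blast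
    with \<open>(S - {i}) \<union> {i} = S\<close> show "\<nu> S - \<nu> (S - {i}) = 0" by simp
  qed
  thus ?thesis unfolding shapley_def by simp
qed

lemma shapley_add:
  "shapley n (\<lambda>S. \<nu>1 S + \<nu>2 S) i = shapley n \<nu>1 i + shapley n \<nu>2 i"
  unfolding shapley_def distrib_left[symmetric] sum.distrib[symmetric]
  by (intro arg_cong[where f="\<lambda>x. (1 / fact n) * x"] sum.cong refl) (simp add: algebra_simps)

lemma shapley_sym:
  assumes iN: "i \<in> {1..n}" and jN: "j \<in> {1..n}" and ij: "i \<noteq> j"
    and h: "\<forall>C. C \<subseteq> {1..n} - {i, j} \<longrightarrow> \<nu> (C \<union> {i}) = \<nu> (C \<union> {j})"
  shows "shapley n \<nu> i = shapley n \<nu> j"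
proof -
  define N where "N = {1..n}"
  define t where "t x = (if x = i then j else if x = j then i else x)" for x
  have tt: "\<And>x. t (t x) = x" by (simp add: t_def)
  have tinj: "inj t" by (metis injI tt)
  have tT: "\<And>T. t ` (t ` T) = T" by (simp add: image_image tt)
  have tN: "\<And>T. T \<subseteq> N \<Longrightarrow> t ` T \<subseteq> N" using iN jN by (auto simp: t_def N_def)
  have inv: "\<And>S. S \<subseteq> N \<Longrightarrow> \<nu> (t ` S) = \<nu> S"
  proof -
    fix S assume S: "S \<subseteq> N"
    consider "i \<in> S" "j \<in> S" | "i \<notin> S" "j \<notin> S" | "i \<in> S" "j \<notin> S" | "i \<notin> S" "j \<in> S" by blast
    then show "\<nu> (t ` S) = \<nu> S"
    proof cases
      case 1
      have "t ` S = S"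
      proof
        show "t ` S \<subseteq> S" using 1 by (auto simp: t_def)
        show "S \<subseteq> t ` S" using 1 by (force simp: t_def image_iff)
      qed
      thus ?thesis by simp
    next
      case 2
      have "t ` S = S" using 2 by (force simp: t_def image_iff)
      thus ?thesis by simp
    next
      case 3
      define C where "C = S - {i}"
      have C: "C \<subseteq> {1..n} - {i, j}" using S 3 by (auto simp: C_def N_def)
      have "S = C \<union> {i}" using 3 by (auto simp: C_def)
      moreover have "t ` S = C \<union> {j}" using 3 by (force simp: t_def C_def image_iff)
      ultimately show ?thesis using h C by metis
    next
      case 4
      define C where "C = S - {j}"
      have C: "C \<subseteq> {1..n} - {i, j}" using S 4 by (auto simp: C_def N_def)
      have "S = C \<union> {j}" using 4 by (auto simp: C_def)
      moreover have "t ` S = C \<union> {i}" using 4 by (force simp: t_def C_def image_iff)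
      ultimately show ?thesis using h C by metis
    qed
  qed
  have "(\<Sum>S\<in>{S. S \<subseteq> N \<and> j \<in> S}. fact (card S - 1) * fact (n - card S) * (\<nu> S - \<nu> (S - {j})))
     = (\<Sum>S\<in>{S. S \<subseteq> N \<and> i \<in> S}. fact (card S - 1) * fact (n - card S) * (\<nu> S - \<nu> (S - {i})))"
  proof (rule sum.reindex_bij_witness[where i="\<lambda>T. t ` T" and j="\<lambda>T. t ` T"])
    fix S assume S: "S \<in> {S. S \<subseteq> N \<and> j \<in> S}"
    show "t ` t ` S = S" by (rule tT)
    show "t ` S \<in> {S. S \<subseteq> N \<and> i \<in> S}" using S tN iN jN by (auto simp: t_def image_iff N_def)
    have cS: "card (t ` S) = card S" using tinj by (simp add: card_image inj_on_subset)
    have tj: "t j = i" by (simp add: t_def)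
    have "t ` S - {i} = t ` (S - {j})" using tinj tj by (simp add: image_set_diff)
    moreover have "\<nu> (t ` (S - {j})) = \<nu> (S - {j})" using S by (intro inv) auto
    moreover have "\<nu> (t ` S) = \<nu> S" using S by (intro inv) auto
    ultimately show "fact (card (t ` S) - 1) * fact (n - card (t ` S)) * (\<nu> (t ` S) - \<nu> (t ` S - {i}))
        = fact (card S - 1) * fact (n - card S) * (\<nu> S - \<nu> (S - {j}))" using cS by simp
  next
    fix S assume S: "S \<in> {S. S \<subseteq> N \<and> i \<in> S}"
    show "t ` t ` S = S" by (rule tT)
    show "t ` S \<in> {S. S \<subseteq> N \<and> j \<in> S}" using S tN iN jN by (auto simp: t_def image_iff N_def)
  qed
  thus ?thesis unfolding shapley_def N_def by simp
qed



lemma PD_empty: "PD V r par l {} = 0" by (simp add: PD_def)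

lemma PD_cong:
  assumes "\<forall>e\<in>tree_edges V r. l1 e = l2 e"
  shows "PD V r par l1 = PD V r par l2"
proof
  fix S
  have "\<And>e. e \<in> (\<Union>i\<in>S. root_path V r par i) \<Longrightarrow> l1 e = l2 e"
    using assms by (auto simp: root_path_def)
  thus "PD V r par l1 S = PD V r par l2 S" unfolding PD_def by (rule sum.cong[OF refl])
qed

lemma PD_add: "PD V r par (\<lambda>x. l1 x + l2 x) = (\<lambda>S. PD V r par l1 S + PD V r par l2 S)"
  by (rule ext) (simp add: PD_def sum.distrib)

lemma PD_single:
  assumes fV: "finite V" and e: "e \<in> tree_edges V r" and S: "S \<subseteq> tree_leaves V r par"
  shows "PD V r par (\<lambda>x. if x = e then c else 0) S
     = (if S \<inter> {i \<in> tree_leaves V r par. is_anc par e i} \<noteq> {} then c else 0)"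
proof -
  define U where "U = (\<Union>i\<in>S. root_path V r par i)"
  have "U \<subseteq> tree_edges V r" by (auto simp: U_def root_path_def)
  hence fU: "finite U" using fV by (auto simp: tree_edges_def intro: finite_subset)
  have "PD V r par (\<lambda>x. if x = e then c else 0) S = (if e \<in> U then c else 0)"
    unfolding PD_def U_def[symmetric] using fU by (simp add: sum.delta)
  moreover have "(e \<in> U) = (S \<inter> {i \<in> tree_leaves V r par. is_anc par e i} \<noteq> {})"
    using e S by (auto simp: U_def root_path_def)
  ultimately show ?thesis by simp
qed

lemma L:
  assumes ax: "value_axioms n G \<psi>" and \<nu>G: "\<nu> \<in> G" and DN: "D \<subseteq> {1..n}" and Dne: "D \<noteq> {}"
    and \<nu>S: "\<forall>S. S \<subseteq> {1..n} \<longrightarrow> \<nu> S = (if S \<inter> D \<noteq> {} then c else 0)" and iN: "i \<in> {1..n}"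
  shows "\<psi> \<nu> i = (if i \<in> D then c / card D else 0)"
proof -
  note ax' = ax[unfolded value_axioms_def]
  note eff = bspec[OF conjunct1[OF ax'] \<nu>G]
  note sym = bspec[OF conjunct1[OF conjunct2[OF ax']] \<nu>G]
  note dum = bspec[OF conjunct1[OF conjunct2[OF conjunct2[OF ax']]] \<nu>G]
  have out: "\<And>k. k \<in> {1..n} \<Longrightarrow> k \<notin> D \<Longrightarrow> \<psi> \<nu> k = 0"
  proof -
    fix k assume k: "k \<in> {1..n}" "k \<notin> D"
    have H: "\<forall>C. C \<subseteq> {1..n} - {k} \<longrightarrow> \<nu> (C \<union> {k}) = \<nu> C"
    proof (intro allI impI)
      fix C assume C: "C \<subseteq> {1..n} - {k}"
      have "(C \<union> {k}) \<inter> D = C \<inter> D" using k by auto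
      moreover have "C \<union> {k} \<subseteq> {1..n}" "C \<subseteq> {1..n}" using C k by auto
      ultimately show "\<nu> (C \<union> {k}) = \<nu> C" using \<nu>S by simp
    qed
    show "\<psi> \<nu> k = 0" by (rule dum[rule_format, OF k(1)]) (use H in blast)
  qed
  have inn: "\<And>k j. k \<in> D \<Longrightarrow> j \<in> D \<Longrightarrow> \<psi> \<nu> k = \<psi> \<nu> j"
  proof -
    fix k j assume kj: "k \<in> D" "j \<in> D"
    show "\<psi> \<nu> k = \<psi> \<nu> j"
    proof (cases "k = j")
      case False
      have H: "\<forall>C. C \<subseteq> {1..n} - {k, j} \<longrightarrow> \<nu> (C \<union> {k}) = \<nu> (C \<union> {j})"
      proof (intro allI impI)
        fix C assume C: "C \<subseteq> {1..n} - {k, j}"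
        have "(C \<union> {k}) \<inter> D \<noteq> {}" "(C \<union> {j}) \<inter> D \<noteq> {}" using kj by auto
        moreover have "C \<union> {k} \<subseteq> {1..n}" "C \<union> {j} \<subseteq> {1..n}" using C kj DN by auto
        ultimately show "\<nu> (C \<union> {k}) = \<nu> (C \<union> {j})" using \<nu>S by simp
      qed
      have kN: "k \<in> {1..n}" and jN: "j \<in> {1..n}" using kj DN by auto
      show ?thesis by (rule sym[rule_format, OF kN jN False]) (use H in blast)
    qed simp
  qed
  obtain i0 where i0: "i0 \<in> D" using Dne by auto
  have fD: "finite D" using DN by (auto intro: finite_subset)
  have "\<nu> {1..n} = c" using \<nu>S DN Dne by (simp add: Int_absorb1)
  have "(\<Sum>k\<in>{1..n}. \<psi> \<nu> k) = (\<Sum>k\<in>{1..n} - D. \<psi> \<nu> k) + (\<Sum>k\<in>D. \<psi> \<nu> k)"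
    using DN by (simp add: sum.subset_diff)
  also have "(\<Sum>k\<in>{1..n} - D. \<psi> \<nu> k) = 0" using out by (intro sum.neutral) auto
  also have "(\<Sum>k\<in>D. \<psi> \<nu> k) = (\<Sum>k\<in>D. \<psi> \<nu> i0)" by (rule sum.cong[OF refl]) (rule inn[OF _ i0])
  also have "\<dots> = real (card D) * \<psi> \<nu> i0" by simp
  finally have "real (card D) * \<psi> \<nu> i0 = c" using eff \<open>\<nu> {1..n} = c\<close> by simp
  moreover have "card D > 0" using fD Dne by auto
  ultimately have "\<psi> \<nu> i0 = c / card D" by (simp add: field_simps)
  show ?thesis
  proof (cases "i \<in> D")
    case True
    with inn[OF True i0] \<open>\<psi> \<nu> i0 = c / card D\<close> show ?thesis by simp
  next
    case False
    with out[OF iN False] show ?thesis by simp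
  qed
qed



lemma shapley_axioms:
  "value_axioms n (PD_games V r par) (shapley n)"
  unfolding value_axioms_def
proof (intro conjI ballI impI allI)
  fix \<nu> assume "\<nu> \<in> PD_games V r par"
  then obtain l where "\<nu> = PD V r par l" by (auto simp: PD_games_def)
  hence "\<nu> {} = 0" by (simp add: PD_empty)
  thus "(\<Sum>i\<in>{1..n}. shapley n \<nu> i) = \<nu> {1..n}" using shapley_eff[of n \<nu>] by simp
next
  fix \<nu> :: "nat set \<Rightarrow> real" and i j assume "i \<in> {1..n}" "j \<in> {1..n}" "i \<noteq> j"
    "\<forall>C. C \<subseteq> {1..n} - {i, j} \<longrightarrow> \<nu> (C \<union> {i}) = \<nu> (C \<union> {j})"
  thus "shapley n \<nu> i = shapley n \<nu> j" by (rule shapley_sym)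
next
  fix \<nu> :: "nat set \<Rightarrow> real" and i assume "\<forall>C. C \<subseteq> {1..n} - {i} \<longrightarrow> \<nu> (C \<union> {i}) = \<nu> C"
  thus "shapley n \<nu> i = 0" by (rule shapley_dummy)
next
  fix \<nu>1 \<nu>2 :: "nat set \<Rightarrow> real" and i
  show "shapley n (\<lambda>S. \<nu>1 S + \<nu>2 S) i = shapley n \<nu>1 i + shapley n \<nu>2 i" by (rule shapley_add)
qed

lemma core:
  assumes ph: "phylo_tree V r par n" and ax: "value_axioms n (PD_games V r par) \<psi>"
    and l: "\<forall>e \<in> tree_edges V r. l e \<ge> 0" and iN: "i \<in> {1..n}"
  shows "\<psi> (PD V r par l) i = (\<Sum>e \<in> root_path V r par i. l e / real (n_desc V r par e))"
proof -
  define E where "E = tree_edges V r"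
  define Dl where "Dl e = {i \<in> tree_leaves V r par. is_anc par e i}" for e
  define g where "g e i = (if i \<in> Dl e then l e / card (Dl e) else 0)" for e i
  define lF where "lF F x = (if x \<in> F then l x else 0)" for F x
  have rt: "rooted_tree V r par" and lv: "tree_leaves V r par = {1..n}" using ph by (auto simp: phylo_tree_def)
  have fV: "finite V" using rt by (simp add: rooted_tree_def)
  have fE: "finite E" using fV by (simp add: E_def tree_edges_def)
  have DN: "\<And>e. Dl e \<subseteq> {1..n}" using lv by (auto simp: Dl_def)
  have Dne: "\<And>e. e \<in> E \<Longrightarrow> Dl e \<noteq> {}"
  proof -
    fix e assume "e \<in> E"
    hence "e \<in> V" by (simp add: E_def tree_edges_def)
    from leaf_below[OF rt this] show "Dl e \<noteq> {}" by (auto simp: Dl_def)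
  qed
  have inG: "\<And>l'. \<forall>e \<in> E. l' e \<ge> 0 \<Longrightarrow> PD V r par l' \<in> PD_games V r par"
    by (auto simp: PD_games_def E_def)
  have addax: "\<And>\<nu>1 \<nu>2 k. \<nu>1 \<in> PD_games V r par \<Longrightarrow> \<nu>2 \<in> PD_games V r par \<Longrightarrow> k \<in> {1..n} \<Longrightarrow>
      \<psi> (\<lambda>S. \<nu>1 S + \<nu>2 S) k = \<psi> \<nu>1 k + \<psi> \<nu>2 k"
    using ax unfolding value_axioms_def by blast
  have dumax: "\<And>\<nu> k. \<nu> \<in> PD_games V r par \<Longrightarrow> k \<in> {1..n} \<Longrightarrow>
      (\<forall>C. C \<subseteq> {1..n} - {k} \<longrightarrow> \<nu> (C \<union> {k}) = \<nu> C) \<Longrightarrow> \<psi> \<nu> k = 0"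
    using ax unfolding value_axioms_def by blast
  have main: "\<forall>k\<in>{1..n}. \<psi> (PD V r par (lF F)) k = (\<Sum>e\<in>F. g e k)" if "F \<subseteq> E" for F
  proof -
    have "finite F" using that fE by (rule finite_subset)
    thus ?thesis using that
    proof (induction F rule: finite_subset_induct)
      case empty
      have z: "PD V r par (lF {}) = (\<lambda>S. 0)" by (rule ext) (simp add: PD_def lF_def)
      have "PD V r par (lF {}) \<in> PD_games V r par" by (rule inG) (simp add: lF_def)
      hence "(\<lambda>S. 0::real) \<in> PD_games V r par" by (simp only: z)
      hence "\<forall>k\<in>{1..n}. \<psi> (\<lambda>S. 0) k = 0" using dumax by simp
      thus ?case unfolding z by simp
    next
      case (insert a F)
      define sg where "sg x = (if x = a then l a else 0)" for x
      have eq: "lF (insert a F) = (\<lambda>x. sg x + lF F x)"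
        using insert.hyps by (auto simp: lF_def sg_def)
      have G1: "PD V r par sg \<in> PD_games V r par" using l insert.hyps by (intro inG) (auto simp: sg_def E_def)
      have G2: "PD V r par (lF F) \<in> PD_games V r par" using l by (intro inG) (auto simp: lF_def E_def)
      have aE: "a \<in> tree_edges V r" using insert.hyps by (simp add: E_def)
      show ?case
      proof
        fix k assume k: "k \<in> {1..n}"
        have "\<psi> (PD V r par (lF (insert a F))) k = \<psi> (\<lambda>S. PD V r par sg S + PD V r par (lF F) S) k"
          by (simp only: eq PD_add)
        also have "\<dots> = \<psi> (PD V r par sg) k + \<psi> (PD V r par (lF F)) k"
          by (rule addax[OF G1 G2 k])
        also have "\<psi> (PD V r par sg) k = g a k"
        proof -
          have "\<forall>S. S \<subseteq> {1..n} \<longrightarrow> PD V r par sg S = (if S \<inter> Dl a \<noteq> {} then l a else 0)"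
            using PD_single[OF fV aE, where c="l a"] lv unfolding sg_def Dl_def by auto
          from L[OF ax G1 DN Dne this k] insert.hyps show ?thesis by (simp add: g_def)
        qed
        also have "\<psi> (PD V r par (lF F)) k = (\<Sum>e\<in>F. g e k)" using insert.IH k by blast
        finally show "\<psi> (PD V r par (lF (insert a F))) k = (\<Sum>e\<in>insert a F. g e k)"
          using insert.hyps by simp
      qed
    qed
  qed
  have "PD V r par (lF E) = PD V r par l" by (rule PD_cong) (simp add: lF_def E_def)
  hence "\<psi> (PD V r par l) i = (\<Sum>e\<in>E. g e i)" using main[of E] iN by simp
  also have "\<dots> = (\<Sum>e\<in>{e \<in> E. i \<in> Dl e}. l e / card (Dl e))"
    using fE by (simp add: sum.inter_filter g_def)
  also have "{e \<in> E. i \<in> Dl e} = root_path V r par i"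
    using iN lv by (auto simp: Dl_def E_def root_path_def)
  also have "(\<Sum>e\<in>root_path V r par i. l e / card (Dl e)) = (\<Sum>e \<in> root_path V r par i. l e / real (n_desc V r par e))"
    by (simp add: Dl_def n_desc_def)
  finally show ?thesis .
qed

theorem theorem7:
  fixes V :: "nat set" and r :: nat and par :: "nat \<Rightarrow> nat" and n :: nat
  assumes "phylo_tree V r par n"
  shows "(\<exists>\<psi>. value_axioms n (PD_games V r par) \<psi>)
    \<and> (\<forall>\<psi>. value_axioms n (PD_games V r par) \<psi> \<longrightarrow>
          (\<forall>\<nu>\<in>PD_games V r par. \<forall>i\<in>{1..n}. \<psi> \<nu> i = shapley n \<nu> i))
    \<and> value_axioms n (PD_games V r par) (shapley n)
    \<and> (\<forall>l. (\<forall>e \<in> tree_edges V r. l e \<ge> 0) \<longrightarrow> (\<forall>i\<in>{1..n}.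
          shapley n (PD V r par l) i = (\<Sum>e \<in> root_path V r par i. l e / real (n_desc V r par e))))"
proof (intro conjI allI impI ballI)
  show "\<exists>\<psi>. value_axioms n (PD_games V r par) \<psi>" using shapley_axioms by blast
  show "value_axioms n (PD_games V r par) (shapley n)" by (rule shapley_axioms)
next
  fix \<psi> \<nu> i assume ax: "value_axioms n (PD_games V r par) \<psi>" and \<nu>: "\<nu> \<in> PD_games V r par" and i: "i \<in> {1..n}"
  from \<nu> obtain l where l: "\<forall>e \<in> tree_edges V r. l e \<ge> 0" and \<nu>l: "\<nu> = PD V r par l"
    by (auto simp: PD_games_def)
  show "\<psi> \<nu> i = shapley n \<nu> i"
    unfolding \<nu>l core[OF assms ax l i] core[OF assms shapley_axioms l i] ..
next
  fix l :: "nat \<Rightarrow> real" and i assume l: "\<forall>e \<in> tree_edges V r. l e \<ge> 0" and i: "i \<in> {1..n}"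
  show "shapley n (PD V r par l) i = (\<Sum>e \<in> root_path V r par i. l e / real (n_desc V r par e))"
    by (rule core[OF assms shapley_axioms l i])
qed


end
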